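(* Let $Q\in\mathbb{C}[z_1,\dots,z_N]$ be a holomorphic polynomial. If the function $z\mapsto Q\big(\frac{z}{1-\langle z,\omega\rangle}\big)$ belongs to $L^{2N+2}(\mathbb{B}_N)$ for some $\omega$ on the unit sphere $\partial\mathbb{B}_N$, then $Q$ is constant.
   Context: $\mathbb{B}_N$ is the open unit ball of $\mathbb{C}^N$ with normalized volume measure, and $\langle z,\omega\rangle=\sum_j z_j\bar\omega_j$. *)

theory Defs
  imports "HOL-Analysis.Analysis"
begin

text \<open>Points of C^N are modelled as complex^'n with N = CARD('n).
  The ball ball 0 1 uses the Euclidean norm of complex^'n.\<close>

definition hinner :: "complex^'n \<Rightarrow> complex^'n \<Rightarrow> complex" where
  "hinner z w = (\<Sum>j\<in>UNIV. z$j * cnj (w$j))"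

definition holo_poly :: "(complex^'n \<Rightarrow> complex) \<Rightarrow> bool" where
  "holo_poly Q \<longleftrightarrow> (\<exists>(A :: ('n \<Rightarrow> nat) set) (c :: ('n \<Rightarrow> nat) \<Rightarrow> complex).
      finite A \<and> (\<forall>z. Q z = (\<Sum>\<alpha>\<in>A. c \<alpha> * (\<Prod>i\<in>UNIV. (z$i) ^ (\<alpha> i)))))"

text \<open>Membership in L^p of the unit ball (w.r.t. Lebesgue measure; normalization is irrelevant).\<close>
definition in_Lp_ball :: "real \<Rightarrow> (complex^'n \<Rightarrow> complex) \<Rightarrow> bool" where
  "in_Lp_ball p f \<longleftrightarrow>
     f \<in> borel_measurable (lebesgue_on (ball 0 1)) \<and>
     integrable (lebesgue_on (ball 0 1)) (\<lambda>z. norm (f z) powr p)"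

end

theory Submission
  imports Defs "HOL-Computational_Algebra.Polynomial"
begin

definition qpoly :: "('n \<Rightarrow> nat) set \<Rightarrow> (('n \<Rightarrow> nat) \<Rightarrow> complex) \<Rightarrow> ('n::finite \<Rightarrow> complex poly) \<Rightarrow> complex poly" where
  "qpoly A c p = (\<Sum>\<alpha>\<in>A. smult (c \<alpha>) (\<Prod>i\<in>UNIV. (p i) ^ (\<alpha> i)))"

lemma qpoly_eval: "poly (qpoly A c p) t = (\<Sum>\<alpha>\<in>A. c \<alpha> * (\<Prod>i\<in>UNIV. (poly (p i) t) ^ (\<alpha> i)))"
  by (simp add: qpoly_def poly_sum poly_prod)

lemma holo_poly_curve:
  assumes "\<forall>z. Q z = (\<Sum>\<alpha>\<in>A. c \<alpha> * (\<Prod>i\<in>UNIV. (z$i) ^ (\<alpha> i)))"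
  shows "Q (\<chi> i. poly (p i) t) = poly (qpoly A c p) t"
  using assms by (simp add: qpoly_eval)

definition ccoef :: "'a::topological_space set \<Rightarrow> ('a \<Rightarrow> complex poly) \<Rightarrow> bool" where
  "ccoef S F \<longleftrightarrow> (\<forall>n. continuous_on S (\<lambda>x. coeff (F x) n))"

lemma ccoef_const: "ccoef S (\<lambda>x. P)"
  by (simp add: ccoef_def)

lemma ccoef_add: "ccoef S F \<Longrightarrow> ccoef S G \<Longrightarrow> ccoef S (\<lambda>x. F x + G x)"
  by (auto simp: ccoef_def intro!: continuous_intros)

lemma ccoef_diff: "ccoef S F \<Longrightarrow> ccoef S G \<Longrightarrow> ccoef S (\<lambda>x. F x - G x)"
  by (auto simp: ccoef_def intro!: continuous_intros)

lemma ccoef_smult: "continuous_on S a \<Longrightarrow> ccoef S F \<Longrightarrow> ccoef S (\<lambda>x. smult (a x) (F x))"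
  by (auto simp: ccoef_def intro!: continuous_intros)

lemma ccoef_pCons: "continuous_on S a \<Longrightarrow> ccoef S F \<Longrightarrow> ccoef S (\<lambda>x. pCons (a x) (F x))"
  unfolding ccoef_def
proof
  fix n assume "continuous_on S a" "\<forall>n. continuous_on S (\<lambda>x. coeff (F x) n)"
  then show "continuous_on S (\<lambda>x. coeff (pCons (a x) (F x)) n)"
    by (cases n) (auto simp: coeff_pCons)
qed

lemma ccoef_mult: "ccoef S F \<Longrightarrow> ccoef S G \<Longrightarrow> ccoef S (\<lambda>x. F x * G x)"
  by (auto simp: ccoef_def coeff_mult intro!: continuous_intros)

lemma ccoef_power: "ccoef S F \<Longrightarrow> ccoef S (\<lambda>x. F x ^ m)"
  by (induction m) (auto intro: ccoef_mult ccoef_const)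

lemma ccoef_sum: "finite I \<Longrightarrow> (\<And>i. i \<in> I \<Longrightarrow> ccoef S (F i)) \<Longrightarrow> ccoef S (\<lambda>x. \<Sum>i\<in>I. F i x)"
  by (induction I rule: finite_induct) (auto intro: ccoef_add ccoef_const)

lemma ccoef_prod: "finite I \<Longrightarrow> (\<And>i. i \<in> I \<Longrightarrow> ccoef S (F i)) \<Longrightarrow> ccoef S (\<lambda>x. \<Prod>i\<in>I. F i x)"
  by (induction I rule: finite_induct) (auto intro: ccoef_mult ccoef_const)

lemma ccoef_qpoly: "(\<And>i. ccoef S (\<lambda>x. p x i)) \<Longrightarrow> ccoef S (\<lambda>x. qpoly A c (p x))"
proof (cases "finite A")
  case True
  assume h: "\<And>i. ccoef S (\<lambda>x. p x i)"
  show ?thesis unfolding qpoly_def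
    by (intro ccoef_sum True ccoef_smult continuous_intros ccoef_prod ccoef_power h) auto
next
  case False
  then show ?thesis by (simp add: qpoly_def ccoef_const)
qed

lemma degree_qpoly:
  assumes "finite A" "\<And>i. degree (p i) \<le> d"
  shows "degree (qpoly A c p) \<le> (\<Sum>\<alpha>\<in>A. \<Sum>i\<in>UNIV. d * \<alpha> i)"
  unfolding qpoly_def
proof (rule degree_sum_le[OF assms(1)])
  fix \<alpha> assume a: "\<alpha> \<in> A"
  have "degree (smult (c \<alpha>) (\<Prod>i\<in>UNIV. p i ^ \<alpha> i)) \<le> degree (\<Prod>i\<in>UNIV. p i ^ \<alpha> i)"
    by (rule degree_smult_le)
  also have "\<dots> \<le> (\<Sum>i\<in>UNIV. degree (p i ^ \<alpha> i))"
    using degree_prod_sum_le[of UNIV "\<lambda>i. p i ^ \<alpha> i"] by (simp add: o_def)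
  also have "\<dots> \<le> (\<Sum>i\<in>UNIV. d * \<alpha> i)"
  proof (rule sum_mono)
    fix i
    have "degree (p i ^ \<alpha> i) \<le> degree (p i) * \<alpha> i" by (rule degree_power_le)
    also have "\<dots> \<le> d * \<alpha> i" using assms(2)[of i] by simp
    finally show "degree (p i ^ \<alpha> i) \<le> d * \<alpha> i" .
  qed
  also have "\<dots> \<le> (\<Sum>\<alpha>\<in>A. \<Sum>i\<in>UNIV. d * \<alpha> i)"
    by (rule member_le_sum[OF a]) (auto simp: assms(1))
  finally show "degree (smult (c \<alpha>) (\<Prod>i\<in>UNIV. p i ^ \<alpha> i)) \<le> (\<Sum>\<alpha>\<in>A. \<Sum>i\<in>UNIV. d * \<alpha> i)" .
qed

lemma poly_lower:
  fixes P :: "complex poly" and t :: real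
  assumes deg: "degree P \<le> D" and D: "D \<ge> 1" and lead: "norm (coeff P D) \<ge> a0" and a0: "a0 > 0"
    and C: "(\<Sum>n<D. norm (coeff P n)) \<le> C" and t1: "t \<ge> 1" and t2: "t \<ge> 2*C/a0"
  shows "norm (poly P (of_real t)) \<ge> a0/2 * t"
proof -
  have "poly P (of_real t) = (\<Sum>i\<le>D. coeff P i * of_real t ^ i)"
  proof -
    have "poly P (of_real t) = (\<Sum>i\<le>degree P. coeff P i * of_real t ^ i)" by (simp add: poly_altdef)
    also have "\<dots> = (\<Sum>i\<le>D. coeff P i * of_real t ^ i)"
      by (rule sum.mono_neutral_left) (auto simp: deg coeff_eq_0)
    finally show ?thesis .
  qed
  also have "\<dots> = coeff P D * of_real t ^ D + (\<Sum>i<D. coeff P i * of_real t ^ i)"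
    by (simp add: lessThan_Suc_atMost[symmetric])
  finally have eq: "poly P (of_real t) = coeff P D * of_real t ^ D + (\<Sum>i<D. coeff P i * of_real t ^ i)" .
  have "norm (\<Sum>i<D. coeff P i * of_real t ^ i) \<le> (\<Sum>i<D. norm (coeff P i) * t ^ (D - 1))"
  proof -
    have "norm (\<Sum>i<D. coeff P i * of_real t ^ i) \<le> (\<Sum>i<D. norm (coeff P i * of_real t ^ i))"
      by (rule norm_sum)
    also have "\<dots> \<le> (\<Sum>i<D. norm (coeff P i) * t ^ (D - 1))"
    proof (rule sum_mono)
      fix i assume "i \<in> {..<D}"
      then have "i \<le> D - 1" by auto
      then have "t ^ i \<le> t ^ (D - 1)" using t1 by (simp add: power_increasing)
      then show "norm (coeff P i * of_real t ^ i) \<le> norm (coeff P i) * t ^ (D - 1)"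
        using t1 by (simp add: norm_mult norm_power mult_left_mono)
    qed
    finally show ?thesis .
  qed
  also have "\<dots> = (\<Sum>i<D. norm (coeff P i)) * t ^ (D - 1)" by (simp add: sum_distrib_right)
  also have "\<dots> \<le> C * t ^ (D - 1)" using C t1 by (simp add: mult_right_mono)
  finally have small: "norm (\<Sum>i<D. coeff P i * of_real t ^ i) \<le> C * t ^ (D - 1)" .
  have big: "norm (coeff P D * of_real t ^ D) \<ge> a0 * t ^ D"
    using lead t1 by (simp add: norm_mult norm_power mult_right_mono)
  have tD: "t ^ D = t * t ^ (D - 1)" using D by (metis One_nat_def Suc_pred less_le_trans not_less not_one_le_zero power_Suc zero_less_one)
  have tpos: "t ^ (D - 1) \<ge> 1" using t1 by simp
  have Ct: "C \<le> a0 * t / 2" using t2 a0 by (simp add: field_simps)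
  have "norm (poly P (of_real t)) \<ge> a0 * t ^ D - C * t ^ (D - 1)"
    unfolding eq using big small norm_triangle_ineq4[of "coeff P D * of_real t ^ D" "- (\<Sum>i<D. coeff P i * of_real t ^ i)"]
    by (smt (verit) norm_diff_ineq norm_minus_cancel)
  also have "a0 * t ^ D - C * t ^ (D - 1) = t ^ (D - 1) * (a0 * t - C)" using tD by (simp add: algebra_simps)
  also have "\<dots> \<ge> 1 * (a0 * t / 2)"
    using tpos Ct a0 t1 by (intro mult_mono) auto
  finally show ?thesis by simp
qed

definition ek :: "'n \<Rightarrow> complex^'n" where "ek k = (\<chi> i. if i = k then 1 else 0)"
definition smulv :: "complex \<Rightarrow> complex^'n \<Rightarrow> complex^'n" where "smulv c z = (\<chi> i. c * z$i)"
definition hh :: "complex^'n \<Rightarrow> complex^'n \<Rightarrow> complex^'n" where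
  "hh v z = z - smulv (2 * hinner z v / hinner v v) v"

lemma hinner_add_left: "hinner (a + b) w = hinner a w + hinner b w"
  by (simp add: hinner_def sum.distrib algebra_simps)
lemma hinner_diff_left: "hinner (a - b) w = hinner a w - hinner b w"
  by (simp add: hinner_def sum_subtractf algebra_simps)
lemma hinner_diff_right: "hinner w (a - b) = hinner w a - hinner w b"
  by (simp add: hinner_def sum_subtractf algebra_simps)
lemma hinner_smulv_left: "hinner (smulv c a) w = c * hinner a w"
  by (simp add: hinner_def smulv_def sum_distrib_left algebra_simps)
lemma hinner_smulv_right: "hinner w (smulv c a) = cnj c * hinner w a"
  by (simp add: hinner_def smulv_def sum_distrib_left algebra_simps)
lemma hinner_cnj: "hinner b a = cnj (hinner a b)"
  by (simp add: hinner_def mult.commute)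

lemma norm_vec_sq: "(norm (z::complex^'n))^2 = (\<Sum>i\<in>UNIV. (cmod (z$i))^2)"
  by (simp add: norm_vec_def L2_set_def sum_nonneg)

lemma hinner_self: "hinner z z = of_real ((norm z)^2)"
proof -
  have "\<And>j. z$j * cnj (z$j) = of_real ((cmod (z$j))^2)" by (rule complex_norm_square[symmetric])
  then show ?thesis unfolding hinner_def norm_vec_sq of_real_sum by simp
qed

lemma hinner_self_real: "cnj (hinner z z) = hinner z z"
  by (simp add: hinner_self)

lemma smulv_smulv: "smulv a (smulv b z) = smulv (a*b) z"
  by (simp add: smulv_def vec_eq_iff)
lemma smulv_one: "smulv 1 z = z"
  by (simp add: smulv_def vec_eq_iff)
lemma smulv_diff: "smulv c (a - b) = smulv c a - smulv c b"
  by (simp add: smulv_def vec_eq_iff algebra_simps)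

lemma hh_selfadj: "hinner (hh v a) b = hinner a (hh v b)"
proof -
  have "hinner (hh v a) b = hinner a b - (2 * hinner a v / hinner v v) * hinner v b"
    by (simp add: hh_def hinner_diff_left hinner_smulv_left)
  also have "\<dots> = hinner a b - cnj (2 * hinner b v / hinner v v) * hinner a v"
    by (simp add: hinner_self_real hinner_cnj[of v b] hinner_cnj[of v a])
  also have "\<dots> = hinner a (hh v b)"
    by (simp add: hh_def hinner_diff_right hinner_smulv_right)
  finally show ?thesis .
qed

lemma hh_invol: "hh v (hh v z) = z"
proof (cases "hinner v v = 0")
  case True then show ?thesis by (simp add: hh_def smulv_def vec_eq_iff)
next
  case False
  have "hinner (hh v z) v = - hinner z v"
    using False by (simp add: hh_def hinner_diff_left hinner_smulv_left)
  then show ?thesis using False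
    by (simp add: hh_def smulv_def vec_eq_iff algebra_simps)
qed

lemma hh_norm: "norm (hh v z) = norm z"
proof -
  have "hinner (hh v z) (hh v z) = hinner z z"
    by (simp add: hh_selfadj hh_invol)
  then have "(norm (hh v z))^2 = (norm z)^2" unfolding hinner_self of_real_eq_iff .
  then show ?thesis by (simp add: power2_eq_iff_nonneg)
qed

lemma hh_diff: "hh v (a - b) = hh v a - hh v b"
  by (simp add: hh_def hinner_diff_left smulv_def vec_eq_iff algebra_simps diff_divide_distrib)

lemma hh_smulv: "hh v (smulv c z) = smulv c (hh v z)"
  unfolding hh_def hinner_smulv_left by (simp add: smulv_def vec_eq_iff algebra_simps)

lemma hh_component: "(hh v z)$i = z$i - 2 * (\<Sum>j\<in>UNIV. z$j * cnj (v$j)) / hinner v v * v$i"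
  by (simp add: hh_def smulv_def hinner_def)

lemma hinner_ek_right: "hinner w (ek k) = w$k"
  by (simp add: hinner_def ek_def if_distrib cong: if_cong)
lemma hinner_ek_left: "hinner (ek k) w = cnj (w$k)"
  by (metis hinner_cnj hinner_ek_right)

lemma ek_same: "ek k $ k = 1" by (simp add: ek_def)
lemma smulv_component: "smulv c z $ i = c * z $ i" by (simp add: smulv_def)

definition mu :: "complex^'n \<Rightarrow> 'n \<Rightarrow> complex" where
  "mu w k = (if w$k = 0 then 1 else w$k / of_real (cmod (w$k)))"
definition vv :: "complex^'n \<Rightarrow> 'n \<Rightarrow> complex^'n" where
  "vv w k = smulv (mu w k) (ek k) - w"
definition UU :: "complex^'n \<Rightarrow> 'n \<Rightarrow> complex^'n \<Rightarrow> complex^'n" where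
  "UU w k y = hh (vv w k) (smulv (mu w k) y)"

lemma mu_norm: "cmod (mu w k) = 1"
  by (simp add: mu_def norm_divide)

lemma mu_cnj_mult: "cnj (mu w k) * mu w k = 1"
  using mu_norm[of w k] by (metis complex_norm_square mult.commute of_real_1 power_one)

lemma mu_mult_cnj: "mu w k * cnj (mu w k) = 1"
  using mu_cnj_mult[of w k] by (simp add: mult.commute)

lemma mu_cnj_wk: "cnj (mu w k) * w$k = of_real (cmod (w$k))"
proof (cases "w$k = 0")
  case True then show ?thesis unfolding mu_def by simp
next
  case False
  have sq: "cnj (w$k) * w$k = of_real ((cmod (w$k))^2)"
    using complex_norm_square[of "w$k"] by (simp only: mult.commute)
  have nz: "(of_real (cmod (w$k)) :: complex) \<noteq> 0" using False by simp
  have "cnj (mu w k) * w$k = cnj (w$k) * w$k / of_real (cmod (w$k))"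
    using False by (simp add: mu_def)
  also have "\<dots> = of_real ((cmod (w$k))^2) / of_real (cmod (w$k))" by (simp only: sq)
  also have "\<dots> = of_real (cmod (w$k))" using nz by (simp add: power2_eq_square)
  finally show ?thesis .
qed

lemma hh_vv_w:
  assumes "norm w = 1"
  shows "hh (vv w k) w = smulv (mu w k) (ek k)"
proof -
  define r where "r = cmod (w$k)"
  define m where "m = mu w k"
  have ww: "hinner w w = 1" using assms by (simp add: hinner_self)
  have ee: "hinner (ek k) (ek k) = 1" unfolding hinner_ek_right by (simp add: ek_def)
  have wv: "hinner w (vv w k) = of_real r - 1"
    unfolding vv_def hinner_diff_right hinner_smulv_right hinner_ek_right ww
    using mu_cnj_wk[of w k] by (simp add: r_def)
  have vv2: "hinner (vv w k) (vv w k) = 2 - 2 * of_real r"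
  proof -
    have "hinner (vv w k) (vv w k) = hinner (smulv m (ek k)) (vv w k) - hinner w (vv w k)"
      by (simp add: vv_def hinner_diff_left m_def)
    also have "hinner (smulv m (ek k)) (vv w k) = cnj (hinner (vv w k) (smulv m (ek k)))"
      by (rule hinner_cnj)
    also have "hinner (vv w k) (smulv m (ek k)) = 1 - of_real r"
    proof -
      have "hinner (vv w k) (smulv m (ek k)) = cnj m * (m * 1) - cnj m * w$k"
        unfolding vv_def hinner_diff_left hinner_smulv_left hinner_smulv_right hinner_ek_right
        by (simp add: m_def ek_same smulv_component algebra_simps)
      also have "\<dots> = 1 - of_real r" using mu_cnj_mult[of w k] mu_cnj_wk[of w k]
        by (simp add: m_def r_def)
      finally show ?thesis .
    qed
    finally show ?thesis using wv by simp
  qed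
  show ?thesis
  proof (cases "r = 1")
    case True
    then have "hinner (vv w k) (vv w k) = 0" using vv2 by simp
    then have "norm (vv w k) = 0" by (simp add: hinner_self)
    then have "vv w k = 0" by simp
    then have "w = smulv m (ek k)" by (simp add: vv_def m_def)
    moreover have "hh (vv w k) w = w" using \<open>vv w k = 0\<close> by (simp add: hh_def hinner_def smulv_def vec_eq_iff)
    ultimately show ?thesis by (simp add: m_def)
  next
    case False
    then have ne: "(2::complex) - 2 * of_real r \<noteq> 0" by (simp add: of_real_eq_1_iff)
    have "2 * hinner w (vv w k) / hinner (vv w k) (vv w k) = -1"
      using ne unfolding wv vv2 by (simp add: field_simps)
    then have "hh (vv w k) w = w + vv w k"
      by (simp add: hh_def smulv_def vec_eq_iff)
    then show ?thesis by (simp add: vv_def)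
  qed
qed

lemma UU_hinner:
  assumes "norm w = 1"
  shows "hinner (UU w k y) w = y$k"
proof -
  have "hinner (UU w k y) w = hinner (smulv (mu w k) y) (smulv (mu w k) (ek k))"
    unfolding UU_def hh_selfadj hh_vv_w[OF assms] ..
  also have "\<dots> = y$k" unfolding hinner_smulv_left hinner_smulv_right hinner_ek_right
    using mu_cnj_mult[of w k] by (simp add: smulv_component mult.assoc[symmetric])
  finally show ?thesis .
qed

lemma UU_norm: "norm (UU w k y) = norm y"
proof -
  have "norm (smulv (mu w k) y) = norm y"
  proof -
    have "hinner (smulv (mu w k) y) (smulv (mu w k) y) = hinner y y"
      unfolding hinner_smulv_left hinner_smulv_right
      using mu_cnj_mult[of w k] by (simp add: mult.assoc[symmetric])
    then have "(norm (smulv (mu w k) y))^2 = (norm y)^2" unfolding hinner_self of_real_eq_iff .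
    then show ?thesis by (simp add: power2_eq_iff_nonneg)
  qed
  then show ?thesis by (simp add: UU_def hh_norm)
qed

lemma UU_diff: "UU w k (a - b) = UU w k a - UU w k b"
  by (simp add: UU_def smulv_diff hh_diff)

lemma UU_smulv: "UU w k (smulv c y) = smulv c (UU w k y)"
proof -
  have "smulv (mu w k) (smulv c y) = smulv c (smulv (mu w k) y)"
    by (simp add: smulv_def vec_eq_iff)
  then show ?thesis unfolding UU_def by (simp only: hh_smulv)
qed

lemma UU_surj: "UU w k (smulv (cnj (mu w k)) (hh (vv w k) z)) = z"
  unfolding UU_def smulv_smulv mu_mult_cnj smulv_one hh_invol ..

lemma UU_inj: "UU w k a = UU w k b \<Longrightarrow> a = b"
proof -
  assume "UU w k a = UU w k b"
  then have "UU w k (a - b) = 0" by (simp add: UU_diff)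
  then have "norm (a - b) = 0" using UU_norm[of w k "a - b"] by simp
  then show "a = b" by simp
qed

lemma UU_component: "(UU w k y)$i = mu w k * y$i - 2 * (\<Sum>j\<in>UNIV. mu w k * y$j * cnj (vv w k$j)) / hinner (vv w k) (vv w k) * vv w k$i"
  by (simp add: UU_def hh_component smulv_def)

lemma UU_ball: "UU w k ` ball c r = ball (UU w k c) r"
proof
  show "UU w k ` ball c r \<subseteq> ball (UU w k c) r"
    by (auto simp: dist_norm UU_diff[symmetric] UU_norm)
next
  show "ball (UU w k c) r \<subseteq> UU w k ` ball c r"
  proof
    fix z assume z: "z \<in> ball (UU w k c) r"
    define y where "y = smulv (cnj (mu w k)) (hh (vv w k) z)"
    have zy: "z = UU w k y" by (simp add: y_def UU_surj)
    have "y \<in> ball c r" using z unfolding zy by (simp add: dist_norm UU_diff[symmetric] UU_norm)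
    then show "z \<in> UU w k ` ball c r" using zy by blast
  qed
qed

lemma UU_open: "open S \<Longrightarrow> open (UU w k ` S)"
  unfolding open_contains_ball
proof
  fix z assume S: "\<forall>x\<in>S. \<exists>e>0. ball x e \<subseteq> S" and z: "z \<in> UU w k ` S"
  then obtain y where y: "y \<in> S" "z = UU w k y" by blast
  then obtain e where "e > 0" "ball y e \<subseteq> S" using S by blast
  have "ball z e = UU w k ` ball y e" using y UU_ball[of w k y e] by simp
  then have "ball z e \<subseteq> UU w k ` S" using \<open>ball y e \<subseteq> S\<close> by blast
  then show "\<exists>e>0. ball z e \<subseteq> UU w k ` S" using \<open>e > 0\<close> by blast
qed

lemma emeasure_image_ge:
  fixes F :: "'a::euclidean_space \<Rightarrow> 'a"
  assumes Fb: "\<And>c r. F ` ball c r = ball (F c) r" and inj: "inj F"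
    and Sx: "open Sx" and FO: "open (F ` Sx)"
  shows "emeasure lborel Sx \<le> emeasure lborel (F ` Sx)"
proof -
  define K where "K = {(c, r). 0 < r \<and> ball c r \<subseteq> Sx}"
  have cov: "\<exists>i. i \<in> K \<and> x \<in> ball (fst i) (snd i) \<and> snd i < d" if "x \<in> Sx" "0 < d" for x d
  proof -
    obtain e where e: "e > 0" "ball x e \<subseteq> Sx" using Sx \<open>x \<in> Sx\<close> open_contains_ball by blast
    show ?thesis
      by (rule exI[of _ "(x, min e (d/2))"]) (use e \<open>0 < d\<close> in \<open>auto simp: K_def\<close>)
  qed
  obtain C where C: "countable C" "C \<subseteq> K"
    and pw: "pairwise (\<lambda>i j. disjnt (ball (fst i) (snd i)) (ball (fst j) (snd j))) C"
    and neg: "negligible (Sx - (\<Union>i\<in>C. ball (fst i) (snd i)))"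
    by (rule Vitali_covering_theorem_balls[of Sx K fst snd, OF cov]) auto
  define Bl where "Bl i = ball (fst i) (snd i)" for i :: "'a \<times> real"
  define FB where "FB i = ball (F (fst i)) (snd i)" for i :: "'a \<times> real"
  have FB: "FB i = F ` Bl i" for i by (simp add: FB_def Bl_def Fb)
  have dj: "disjoint_family_on Bl C"
    using pw unfolding disjoint_family_on_def pairwise_def disjnt_def Bl_def by blast
  have djF: "disjoint_family_on FB C"
    using dj inj unfolding disjoint_family_on_def FB by (auto simp: image_Int[symmetric] inj_def)
  have N0: "emeasure lborel (Sx - (\<Union>i\<in>C. Bl i)) = 0"
  proof -
    have "open (\<Union>i\<in>C. Bl i)" by (auto simp: Bl_def)
    then have "Sx - (\<Union>i\<in>C. Bl i) \<in> sets lborel" using Sx by (simp add: sets.Diff borel_open)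
    moreover have "Sx - (\<Union>i\<in>C. Bl i) \<in> null_sets lebesgue"
      using neg by (simp add: negligible_iff_null_sets Bl_def)
    ultimately have "Sx - (\<Union>i\<in>C. Bl i) \<in> null_sets lborel"
      using null_sets_completion_iff by blast
    then show ?thesis by auto
  qed
  have U1: "(\<Union>i\<in>C. Bl i) \<in> sets lborel" unfolding sets_lborel by (rule borel_open) (auto simp: Bl_def intro!: open_UN)
  have U2: "(Sx - (\<Union>i\<in>C. Bl i)) \<in> sets lborel"
    using U1 Sx by (simp add: sets.Diff borel_open)
  have "emeasure lborel Sx \<le> emeasure lborel ((\<Union>i\<in>C. Bl i) \<union> (Sx - (\<Union>i\<in>C. Bl i)))"
    by (rule emeasure_mono) (use U1 Sx in \<open>auto intro!: sets.Un borel_open\<close>)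
  also have "\<dots> \<le> emeasure lborel (\<Union>i\<in>C. Bl i) + emeasure lborel (Sx - (\<Union>i\<in>C. Bl i))"
    by (rule emeasure_subadditive) (use U1 U2 in auto)
  also have "\<dots> = emeasure lborel (\<Union>i\<in>C. Bl i)" using N0 by simp
  also have "\<dots> = (\<integral>\<^sup>+ i. emeasure lborel (Bl i) \<partial>count_space C)"
    by (rule emeasure_UN_countable) (use C dj in \<open>auto simp: Bl_def[abs_def]\<close>)
  also have "\<dots> = (\<integral>\<^sup>+ i. emeasure lborel (FB i) \<partial>count_space C)"
  proof (rule nn_integral_cong)
    fix i assume "i \<in> space (count_space C)"
    then have "snd i > 0" using C by (auto simp: K_def)
    then show "emeasure lborel (Bl i) = emeasure lborel (FB i)"
      by (simp add: Bl_def FB_def emeasure_ball)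
  qed
  also have "\<dots> = emeasure lborel (\<Union>i\<in>C. FB i)"
    by (rule emeasure_UN_countable[symmetric]) (use C djF in \<open>auto simp: FB_def[abs_def]\<close>)
  also have "\<dots> \<le> emeasure lborel (F ` Sx)"
  proof (rule emeasure_mono)
    show "(\<Union>i\<in>C. FB i) \<subseteq> F ` Sx" unfolding FB
    proof (intro UN_least image_mono)
      fix i assume "i \<in> C"
      then have iK: "i \<in> K" using C by blast
      obtain c r where cr: "i = (c, r)" by force
      show "Bl i \<subseteq> Sx" using iK by (simp add: K_def Bl_def cr)
    qed
    show "F ` Sx \<in> sets lborel" using FO by simp
  qed
  finally show ?thesis .
qed

definition Tt :: "real \<Rightarrow> 'n \<Rightarrow> complex^'n \<Rightarrow> complex^'n" where
  "Tt t k x = (\<chi> i. if i = k then 1 - x$i / of_real (t^2) else x$i / of_real t)"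

definition Tinv :: "real \<Rightarrow> 'n \<Rightarrow> complex^'n \<Rightarrow> complex^'n" where
  "Tinv t k y = (\<chi> i. if i = k then of_real (t^2) * (1 - y$i) else of_real t * y$i)"

lemma Tinv_Tt: "t > 0 \<Longrightarrow> Tinv t k (Tt t k x) = x"
  by (simp add: Tinv_def Tt_def vec_eq_iff)
lemma Tt_Tinv: "t > 0 \<Longrightarrow> Tt t k (Tinv t k y) = y"
  by (simp add: Tinv_def Tt_def vec_eq_iff)

lemma Tt_image: "t > 0 \<Longrightarrow> Tt t k ` B = Tinv t k -` B"
  by (auto simp: Tinv_Tt Tt_Tinv image_iff) (metis Tt_Tinv)

lemma Tinv_cont: "continuous_on UNIV (Tinv t k)"
  unfolding Tinv_def
  apply (intro continuous_on_vec_lambda)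
  subgoal for i by (cases "i = k") (auto intro!: continuous_intros)
  done

lemma Tt_cont: "t > 0 \<Longrightarrow> continuous_on UNIV (Tt t k)"
  unfolding Tt_def
  apply (intro continuous_on_vec_lambda)
  subgoal for i by (cases "i = k") (auto intro!: continuous_intros)
  done

lemma Tt_affine:
  fixes k :: "'n::finite"
  assumes t: "t > 0"
  defines "c \<equiv> (\<lambda>j::complex^'n. if j \<in> {axis k 1, axis k \<i>} then - 1 / t^2 else 1 / t)"
  shows "Tt t k x = axis k 1 + (\<Sum>j\<in>Basis. (c j * (x \<bullet> j)) *\<^sub>R j)"
proof -
  define s where "s i = (if i = k then - 1 / t^2 else 1 / t)" for i
  define z where "z = (\<chi> i. of_real (s i) * x$i)"
  have zT: "Tt t k x = axis k 1 + z"
    using t by (auto simp: Tt_def z_def s_def vec_eq_iff axis_def field_simps)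
  have "z \<bullet> j = c j * (x \<bullet> j)" if j: "j \<in> Basis" for j
  proof -
    obtain i u where iu: "j = axis i u" "u \<in> Basis" using j by (auto simp: Basis_vec_def)
    have u: "u = 1 \<or> u = \<i>" using iu(2) by (auto simp: Basis_complex_def)
    have cj: "c (axis i u) = s i" using u by (auto simp: c_def s_def axis_eq_axis)
    have "z \<bullet> j = (of_real (s i) * x$i) \<bullet> u" by (simp add: iu inner_axis z_def)
    also have "\<dots> = s i * (x$i \<bullet> u)" by (simp add: scaleR_conv_of_real[symmetric])
    also have "\<dots> = c j * (x \<bullet> j)" by (simp add: cj iu inner_axis)
    finally show ?thesis .
  qed
  then have "z = (\<Sum>j\<in>Basis. (c j * (x \<bullet> j)) *\<^sub>R j)"
    using euclidean_representation[of z] by (metis (no_types, lifting) sum.cong)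
  then show ?thesis using zT by simp
qed

lemma prod_c:
  fixes k :: "'n::finite"
  and t :: real
  assumes t: "t > 0"
  shows "(\<Prod>j\<in>(Basis::(complex^'n) set). \<bar>if j \<in> {axis k 1, axis k \<i>} then - 1 / t^2 else 1 / t\<bar>) = (1/t)^(2 * CARD('n) + 2)"
proof -
  define Bk where "Bk = {axis k (1::complex), axis k \<i>}"
  have "(\<Prod>j\<in>(Basis::(complex^'n) set). \<bar>if j \<in> Bk then - 1 / t^2 else 1 / t\<bar>)
     = (\<Prod>j\<in>(Basis::(complex^'n) set). (1/t) * (if j \<in> Bk then 1/t else 1))"
    using t by (intro prod.cong) (auto simp: power2_eq_square)
  also have "\<dots> = (\<Prod>j\<in>(Basis::(complex^'n) set). 1/t) * (\<Prod>j\<in>(Basis::(complex^'n) set). (if j \<in> Bk then 1/t else 1))"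
    by (rule prod.distrib)
  also have "(\<Prod>j\<in>(Basis::(complex^'n) set). (if j \<in> Bk then 1/t else 1)) = (\<Prod>j\<in>(Basis::(complex^'n) set) \<inter> Bk. 1/t)"
    by (rule prod.inter_restrict[symmetric]) simp
  also have "(Basis::(complex^'n) set) \<inter> Bk = Bk"
    by (auto simp: Bk_def Basis_vec_def Basis_complex_def)
  also have "card Bk = 2"
    by (simp add: Bk_def axis_eq_axis)
  then have "(\<Prod>j\<in>Bk. 1/t) = (1/t)^2" by simp
  also have "(\<Prod>j\<in>(Basis::(complex^'n) set). 1/t) = (1/t)^(2 * CARD('n))"
    by (simp add: DIM_cart mult.commute)
  finally show ?thesis unfolding Bk_def power_add .
qed

lemma emeasure_Tt:
  fixes k :: "'n::finite"
  assumes t: "t > 0" and B: "open B"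
  shows "emeasure lborel (Tt t k ` B) = ennreal ((1/t)^(2 * CARD('n) + 2)) * emeasure lborel B"
proof -
  define c where "c \<equiv> (\<lambda>j::complex^'n. if j \<in> {axis k 1, axis k \<i>} then - 1 / t^2 else 1 / t)"
  have c0: "\<And>j. j \<in> Basis \<Longrightarrow> c j \<noteq> 0" using t by (simp add: c_def)
  have T: "Tt t k = (\<lambda>x. axis k 1 + (\<Sum>j\<in>Basis. (c j * (x \<bullet> j)) *\<^sub>R j))"
    using Tt_affine[OF t, of k] by (auto simp: c_def)
  have L: "lborel = density (distr lborel borel (Tt t k)) (\<lambda>_. (\<Prod>j\<in>Basis. \<bar>c j\<bar>))"
    unfolding T by (rule lborel_affine_euclidean[OF c0])
  have openTB: "open (Tt t k ` B)" using Tt_image[OF t] B Tinv_cont open_vimage by metis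
  have meas: "Tt t k \<in> borel_measurable borel"
    using Tt_cont[OF t] by (rule borel_measurable_continuous_onI)
  have pre: "Tt t k -` (Tt t k ` B) = B"
    using t by (auto simp: image_iff) (metis Tinv_Tt)
  have "emeasure lborel (Tt t k ` B) = emeasure (density (distr lborel borel (Tt t k)) (\<lambda>_. (\<Prod>j\<in>Basis. \<bar>c j\<bar>))) (Tt t k ` B)"
    using L by simp
  also have "\<dots> = ennreal (\<Prod>j\<in>Basis. \<bar>c j\<bar>) * emeasure lborel B"
    using openTB meas pre
    by (simp add: emeasure_density nn_integral_cmult_indicator emeasure_distr)
  also have "(\<Prod>j\<in>Basis. \<bar>c j\<bar>) = (1/t)^(2 * CARD('n) + 2)"
    unfolding c_def by (rule prod_c[OF t])
  finally show ?thesis .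
qed

lemma norm_smulv: "norm (smulv c z) = cmod c * norm z"
proof -
  have "(norm (smulv c z))^2 = (cmod c * norm z)^2"
    by (simp add: norm_vec_sq smulv_def power_mult_distrib norm_mult sum_distrib_left)
  then show ?thesis by (simp add: power2_eq_iff_nonneg)
qed

lemma poly_const_line:
  assumes Qeq: "\<forall>z. Q z = (\<Sum>\<alpha>\<in>A. c \<alpha> * (\<Prod>i\<in>UNIV. (z$i) ^ (\<alpha> i)))"
    and r: "r > 0" and ball: "\<And>z::complex^'n. norm z < r \<Longrightarrow> Q z = c0"
  shows "Q z = c0"
proof (cases "z = 0")
  case True then show ?thesis using ball r by simp
next
  case False
  define P where "P = qpoly A c (\<lambda>i. [:0, z$i:]) - [:c0:]"
  have Pev: "poly P s = Q (\<chi> i. s * z$i) - c0" for s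
  proof -
    have "Q (\<chi> i. poly [:0, z$i:] s) = poly (qpoly A c (\<lambda>i. [:0, z$i:])) s"
      by (rule holo_poly_curve[OF Qeq])
    moreover have "(\<chi> i. poly [:0, z$i:] s) = (\<chi> i. s * z$i)" by (simp add: vec_eq_iff)
    ultimately show ?thesis by (simp add: P_def)
  qed
  define e where "e = r / norm z"
  have e: "e > 0" using r False by (simp add: e_def)
  have roots: "of_real ` {0<..<e} \<subseteq> {x. poly P x = 0}"
  proof
    fix x :: complex assume "x \<in> of_real ` {0<..<e}"
    then obtain s where s: "x = of_real s" "0 < s" "s < e" by auto
    have "(\<chi> i. of_real s * z$i) = smulv (of_real s) z" by (simp add: smulv_def)
    moreover have "norm (smulv (of_real s) z) < r"
      using s False by (simp add: norm_smulv e_def field_simps)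
    ultimately have "Q (\<chi> i. of_real s * z$i) = c0" using ball by simp
    then show "x \<in> {x. poly P x = 0}" using Pev s by simp
  qed
  have "infinite (of_real ` {0<..<e} :: complex set)"
    using e by (auto simp: infinite_Ioo dest!: finite_imageD intro: inj_onI)
  then have "P = 0" using roots poly_roots_finite finite_subset by blast
  then have "poly P 1 = 0" by simp
  then show ?thesis using Pev[of 1] by (simp add: vec_eq_iff)
qed

lemma K0_re:
  assumes "x \<in> ball (axis k 1) (1::real)"
  shows "0 < Re (x$k)" "Re (x$k) < 2" "cmod (x$k - 1) < 1"
proof -
  have "cmod ((x - axis k 1)$k) \<le> norm (x - axis k 1)" by (rule Finite_Cartesian_Product.norm_nth_le)
  then have h: "cmod (x$k - 1) < 1" using assms by (simp add: dist_norm norm_minus_commute axis_def)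
  have "\<bar>Re (x$k - 1)\<bar> < 1" using h abs_Re_le_cmod le_less_trans by blast
  then show "0 < Re (x$k)" "Re (x$k) < 2" "cmod (x$k - 1) < 1" using h by auto
qed

lemma sum_split_k:
  fixes g :: "'n::finite \<Rightarrow> real"
  shows "(\<Sum>i\<in>UNIV. g i) = g k + (\<Sum>i\<in>UNIV - {k}. g i)"
  by (simp add: sum.remove)

lemma Tt_norm:
  fixes x :: "complex^'n"
  assumes x: "x \<in> ball (axis k 1) 1" and t: "t \<ge> 1"
  shows "norm (Tt t k x) < 1"
proof -
  define S where "S = (\<Sum>i\<in>UNIV - {k}. (cmod (x$i))^2)"
  define a where "a = Re (x$k)"
  define b where "b = Im (x$k)"
  define s where "s = 1 / t^2"
  have s0: "s > 0" and s1: "s \<le> 1" using t by (auto simp: s_def)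
  have S0: "S \<ge> 0" by (simp add: S_def sum_nonneg)
  have "(norm (x - axis k 1))^2 = (cmod (x$k - 1))^2 + (\<Sum>i\<in>UNIV - {k}. (cmod ((x - axis k 1)$i))^2)"
    unfolding norm_vec_sq by (subst sum_split_k[of _ k]) (simp add: axis_def)
  also have "(\<Sum>i\<in>UNIV - {k}. (cmod ((x - axis k 1)$i))^2) = S"
    unfolding S_def by (intro sum.cong) (auto simp: axis_def)
  also have "(cmod (x$k - 1))^2 = (a - 1)^2 + b^2" by (simp add: cmod_power2 a_def b_def)
  finally have nx: "(norm (x - axis k 1))^2 = (a - 1)^2 + b^2 + S" .
  have "norm (x - axis k 1) < 1" using x by (simp add: dist_norm norm_minus_commute)
  then have "(norm (x - axis k 1))^2 < 1" by (simp add: power_less_one_iff)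
  then have hx: "(a - 1)^2 + b^2 + S < 1" using nx by simp
  have "(norm (Tt t k x))^2 = (cmod (1 - x$k / of_real (t^2)))^2 + (\<Sum>i\<in>UNIV - {k}. (cmod (x$i / of_real t))^2)"
    unfolding norm_vec_sq by (subst sum_split_k[of _ k]) (simp add: Tt_def)
  also have "(\<Sum>i\<in>UNIV - {k}. (cmod (x$i / of_real t))^2) = s * S"
    unfolding S_def s_def sum_distrib_left using t
    by (intro sum.cong) (auto simp: norm_divide power_divide)
  also have "(cmod (1 - x$k / of_real (t^2)))^2 = (1 - a * s)^2 + (b * s)^2"
    by (simp add: cmod_power2 a_def b_def s_def Re_divide_of_real Im_divide_of_real)
  finally have ny: "(norm (Tt t k x))^2 = (1 - a * s)^2 + (b * s)^2 + s * S" .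
  have q: "s * (a^2 + b^2) \<le> a^2 + b^2" by (rule mult_left_le_one_le) (use s0 s1 in auto)
  have neg: "- 2 * a + s * (a^2 + b^2) + S < 0" using hx q by (simp add: power2_eq_square algebra_simps)
  have "(1 - a * s)^2 + (b * s)^2 + s * S - 1 = s * (- 2 * a + s * (a^2 + b^2) + S)"
    by (simp add: power2_eq_square algebra_simps)
  also have "\<dots> < 0" using s0 neg by (simp add: mult_pos_neg)
  finally have "(norm (Tt t k x))^2 < 1" using ny by simp
  then show ?thesis by (simp add: power_less_one_iff)
qed

lemma Tt_re: "t > 0 \<Longrightarrow> Re (1 - (Tt t k x)$k) = Re (x$k) / t^2"
  by (simp add: Tt_def Re_divide_of_real)

lemma window_sep:
  fixes \<alpha> L t r :: real
  assumes a: "\<alpha> > 0" and L1: "L \<ge> 1" and L2: "L \<ge> 2 / \<alpha>" and t: "t > 0" and mm: "m < m'"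
    and r1: "\<alpha> / (t * L^m)^2 < r" and r2: "r < 2 / (t * L^m')^2"
  shows False
proof -
  define T1 where "T1 = t * L^m"
  define T2 where "T2 = t * L^m'"
  have T1: "T1 > 0" using t L1 by (simp add: T1_def)
  have "L^m' = L^m * L^(m' - m)" using mm by (simp add: power_add[symmetric])
  then have T2: "T2 = T1 * L^(m' - m)" by (simp add: T1_def T2_def)
  have "L^(m' - m) \<ge> L" using L1 mm by (metis One_nat_def Suc_leI le_add_diff_inverse power_increasing power_one_right zero_less_diff)
  then have Lp: "(L^(m' - m))^2 \<ge> L"
    using L1 by (smt (verit) mult_le_cancel_left1 power2_eq_square)
  have aL: "\<alpha> * L \<ge> 2" using L2 a by (simp add: field_simps)
  have "\<alpha> * (L^(m' - m))^2 \<ge> 2" using aL Lp a by (smt (verit) mult_left_mono)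
  moreover have Lpos: "(L^(m' - m))^2 > 0" using L1 by simp
  ultimately have h: "2 / (L^(m' - m))^2 \<le> \<alpha>" by (simp add: divide_le_eq mult.commute)
  have "2 / T2^2 = (2 / (L^(m' - m))^2) / T1^2" unfolding T2 by (simp add: power_mult_distrib)
  also have "\<dots> \<le> \<alpha> / T1^2" using h T1 by (intro divide_right_mono) auto
  finally have "2 / T2^2 \<le> \<alpha> / T1^2" .
  then show False using r1 r2 unfolding T1_def T2_def by simp
qed

theorem lemma3p5:
  fixes Q :: "complex^'n \<Rightarrow> complex" and \<omega> :: "complex^'n"
  assumes "holo_poly Q"
    and "norm \<omega> = 1"
    and "in_Lp_ball (2 * real CARD('n) + 2) (\<lambda>z. Q (\<chi> j. z$j / (1 - hinner z \<omega>)))"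
  shows "\<exists>c. \<forall>z. Q z = c"
proof -
  obtain A c where Afin: "finite A" and Qeq: "\<forall>z. Q z = (\<Sum>\<alpha>\<in>A. c \<alpha> * (\<Prod>i\<in>UNIV. (z$i) ^ (\<alpha> i)))"
    using assms(1) unfolding holo_poly_def by blast
  obtain k :: 'n where True by blast
  define U where "U = UU \<omega> k"
  define v where "v = vv \<omega> k"
  define m where "m = mu \<omega> k"
  define hv where "hv = hinner v v"
  define pp where "pp x j = (if j = k then [: -1, 0, 1 / x$k :] else [: 0, x$j / x$k :])"
    for x :: "complex^'n" and j
  define qq where "qq x i = smult m (pp x i) - smult (2 * v $ i / hv) (\<Sum>j\<in>UNIV. smult (m * cnj (v $ j)) (pp x j))"
    for x i
  define Px where "Px x = qpoly A c (qq x)" for x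
  define f where "f z = Q (\<chi> j. z$j / (1 - hinner z \<omega>))" for z
  define K0 :: "(complex^'n) set" where "K0 = ball (axis k 1) 1"

  have curve: "U (\<chi> j. poly (pp x j) t) = (\<chi> i. poly (qq x i) t)" for x t
  proof -
    have "(U (\<chi> j. poly (pp x j) t))$i = poly (qq x i) t" for i
      unfolding U_def UU_component qq_def
      by (simp add: poly_sum m_def v_def hv_def sum_distrib_left sum_divide_distrib algebra_simps)
    then show ?thesis by (simp add: vec_eq_iff)
  qed
  have RQ: "Q (U (\<chi> j. poly (pp x j) t)) = poly (Px x) t" for x t
    unfolding curve Px_def by (rule holo_poly_curve[OF Qeq])
  have fU: "f (U (Tt t k x)) = poly (Px x) (of_real t)" if xk: "x$k \<noteq> 0" and t: "t > 0" for x t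
  proof -
    define y where "y = Tt t k x"
    have hy: "hinner (U y) \<omega> = y$k" unfolding U_def by (rule UU_hinner[OF assms(2)])
    have yk: "1 - y$k = x$k / of_real (t^2)" by (simp add: y_def Tt_def)
    have "(\<chi> j. (U y)$j / (1 - hinner (U y) \<omega>)) = smulv (1 / (1 - y$k)) (U y)"
      unfolding hy by (simp add: smulv_def vec_eq_iff)
    also have "\<dots> = U (smulv (1 / (1 - y$k)) y)" unfolding U_def UU_smulv ..
    also have "smulv (1 / (1 - y$k)) y = (\<chi> j. poly (pp x j) (of_real t))"
      using xk t by (auto simp: vec_eq_iff smulv_def yk y_def Tt_def pp_def field_simps power2_eq_square)
    finally show ?thesis unfolding f_def y_def using RQ by simp
  qed

  have K0k: "x$k \<noteq> 0" if "x \<in> K0" for x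
    using K0_re(1)[of x k] that unfolding K0_def by auto
  have dpp: "degree (pp x j) \<le> 2" for x j
    by (simp add: pp_def)
  have dqq: "degree (qq x i) \<le> 2" for x i
  proof -
    have "degree (\<Sum>j\<in>UNIV. smult (m * cnj (v $ j)) (pp x j)) \<le> 2"
      by (rule degree_sum_le) (use dpp in \<open>auto intro: order.trans[OF degree_smult_le]\<close>)
    then show ?thesis unfolding qq_def
      by (intro degree_diff_le order.trans[OF degree_smult_le]) (auto intro: dpp)
  qed
  define Bd where "Bd = (\<Sum>\<alpha>\<in>A. \<Sum>i\<in>UNIV. 2 * \<alpha> i)"
  have dPx: "degree (Px x) \<le> Bd" for x
    unfolding Px_def Bd_def by (rule degree_qpoly[OF Afin dqq])
  have cpp: "ccoef K0 (\<lambda>x. pp x j)" for j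
  proof (cases "j = k")
    case True
    have "continuous_on K0 (\<lambda>x. 1 / x$k)" using K0k by (intro continuous_intros) auto
    then show ?thesis using True
      by (simp add: pp_def ccoef_pCons ccoef_const)
  next
    case False
    have "continuous_on K0 (\<lambda>x. x$j / x$k)" using K0k by (intro continuous_intros) auto
    then show ?thesis using False
      by (simp add: pp_def ccoef_pCons ccoef_const)
  qed
  have cqq: "ccoef K0 (\<lambda>x. qq x i)" for i
    unfolding qq_def
    by (intro ccoef_diff ccoef_smult ccoef_sum continuous_on_const cpp) auto
  have cPx: "ccoef K0 Px"
    unfolding Px_def by (rule ccoef_qpoly[OF cqq])
  have e1K: "axis k 1 \<in> K0" by (simp add: K0_def)
  define Ds where "Ds = (\<lambda>x. degree (Px x)) ` K0"
  have Dsfin: "finite Ds" using dPx by (auto simp: Ds_def intro: finite_subset[of _ "{..Bd}"])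
  have Dsne: "Ds \<noteq> {}" using e1K by (auto simp: Ds_def)
  define D where "D = Max Ds"
  have Dmax: "degree (Px x) \<le> D" if "x \<in> K0" for x
    using that Dsfin by (auto simp: D_def Ds_def)
  obtain x0 where x0: "x0 \<in> K0" "degree (Px x0) = D"
    using Max_in[OF Dsfin Dsne] by (auto simp: D_def Ds_def)
  show ?thesis
  proof (cases "D = 0")
    case True
    have const: "poly (Px x) s = poly (Px x) 0" if "x \<in> K0" for x s
    proof -
      have "degree (Px x) = 0" using Dmax[OF that] True by simp
      then show ?thesis by (simp add: poly_altdef)
    qed
    define c0 where "c0 = Q (U (\<chi> j. poly (pp (axis k 1) j) 0))"
    have pp0: "(\<chi> j. poly (pp x j) 0) = (\<chi> j. poly (pp (axis k 1) j) 0)" for x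
      by (simp add: pp_def vec_eq_iff)
    have onK: "Q (U (\<chi> j. poly (pp x j) 1)) = c0" if "x \<in> K0" for x
      using RQ[of x 1] RQ[of x 0] const[OF that, of 1] pp0[of x] by (simp add: c0_def)
    have ballU: "Q (U w) = c0" if w: "norm w < 1/2" for w
    proof -
      define x where "x = (\<chi> i. if i = k then 1 / (1 + w$k) else w$i / (1 + w$k))"
      have wk: "cmod (w$k) < 1/2" using w Finite_Cartesian_Product.norm_nth_le[of w k] by simp
      have wk1: "cmod (1 + w$k) > 1/2"
      proof -
        have "1 \<le> cmod (1 + w$k) + cmod (w$k)"
          using norm_triangle_ineq4[of "1 + w$k" "w$k"] by simp
        then show ?thesis using wk by simp
      qed
      then have wk0: "1 + w$k \<noteq> 0" by auto
      have gam: "(\<chi> j. poly (pp x j) 1) = w"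
      proof -
        define b where "b = 1 + w$k"
        have b0: "b \<noteq> 0" using wk0 by (simp add: b_def)
        have xk: "x$k = 1 / b" by (simp add: x_def b_def)
        have xi: "x$i = w$i / b" if "i \<noteq> k" for i using that by (simp add: x_def b_def)
        have "poly (pp x i) 1 = w$i" for i
        proof (cases "i = k")
          case True
          then show ?thesis using b0 by (simp add: pp_def xk b_def)
        next
          case False
          then show ?thesis using b0 by (simp add: pp_def xk xi)
        qed
        then show ?thesis by (simp add: vec_eq_iff)
      qed
      define w' where "w' = (\<chi> i. if i = k then - w$k else w$i)"
      have nw': "norm w' = norm w"
      proof -
        have "(norm w')^2 = (norm w)^2"
          unfolding norm_vec_sq by (intro sum.cong) (auto simp: w'_def)
        then show ?thesis by (simp add: power2_eq_iff_nonneg)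
      qed
      have "x - axis k 1 = smulv (1 / (1 + w$k)) w'"
      proof -
        define b where "b = 1 + w$k"
        have b0: "b \<noteq> 0" using wk0 by (simp add: b_def)
        have wkb: "w$k = b - 1" by (simp add: b_def)
        have "(x - axis k 1)$i = (smulv (1 / b) w')$i" for i
        proof (cases "i = k")
          case True
          have "1 / b - 1 = 1 / b * (- (b - 1))" using b0 by (simp add: field_simps)
          then show ?thesis using True by (simp add: x_def w'_def smulv_def axis_def wkb flip: b_def)
        next
          case False
          then show ?thesis by (simp add: x_def w'_def smulv_def axis_def flip: b_def)
        qed
        then show ?thesis by (simp add: vec_eq_iff b_def)
      qed
      then have "norm (x - axis k 1) = norm w / cmod (1 + w$k)"
        by (simp add: norm_smulv nw' norm_divide)
      also have "\<dots> < 1" using wk1 w by (simp add: divide_less_eq)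
      finally have "x \<in> K0" by (simp add: K0_def dist_norm norm_minus_commute)
      then show ?thesis using onK gam by metis
    qed
    have ballQ: "Q z = c0" if "norm z < 1/2" for z
    proof -
      define w where "w = smulv (cnj (mu \<omega> k)) (hh (vv \<omega> k) z)"
      have Uw: "U w = z" unfolding U_def w_def by (rule UU_surj)
      have "norm w = norm z" using UU_norm[of \<omega> k w] Uw by (simp add: U_def)
      then show ?thesis using ballU[of w] that Uw by simp
    qed
    have "Q z = c0" for z
      by (rule poly_const_line[OF Qeq, of "1/2"]) (use ballQ in auto)
    then show ?thesis by blast
  next
    case False
    then have D1: "D \<ge> 1" by simp
    define c0 where "c0 = coeff (Px x0) D"
    have "Px x0 \<noteq> 0" using x0(2) D1 by auto
    then have c0nz: "c0 \<noteq> 0" using x0(2) leading_coeff_neq_0 unfolding c0_def by metis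
    define a0 where "a0 = cmod c0 / 2"
    have a0: "a0 > 0" using c0nz by (simp add: a0_def)
    have cD: "continuous_on K0 (\<lambda>x. coeff (Px x) D)" using cPx by (simp add: ccoef_def)
    obtain d1 where d1: "d1 > 0" "\<And>x'. x' \<in> K0 \<Longrightarrow> dist x' x0 < d1 \<Longrightarrow> dist (coeff (Px x') D) c0 < a0"
      using cD x0(1) a0 unfolding continuous_on_iff c0_def by metis
    define g2 where "g2 x = (\<Sum>n<D. cmod (coeff (Px x) n))" for x
    have cg2: "continuous_on K0 g2"
      using cPx unfolding g2_def ccoef_def by (intro continuous_intros) auto
    obtain d2 where d2: "d2 > 0" "\<And>x'. x' \<in> K0 \<Longrightarrow> dist x' x0 < d2 \<Longrightarrow> dist (g2 x') (g2 x0) < 1"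
      using cg2 x0(1) unfolding continuous_on_iff by (metis zero_less_one)
    define C where "C = g2 x0 + 1"
    define \<alpha> where "\<alpha> = Re (x0$k) / 2"
    have \<alpha>: "\<alpha> > 0" using K0_re(1)[of x0 k] x0(1) by (simp add: \<alpha>_def K0_def)
    have dx0: "dist (axis k 1) x0 < 1" using x0(1) by (simp add: K0_def)
    define \<rho> where "\<rho> = min (min d1 d2) (min \<alpha> (1 - dist (axis k 1) x0))"
    have \<rho>: "\<rho> > 0" using d1 d2 \<alpha> dx0 by (simp add: \<rho>_def)
    define B0 where "B0 = ball x0 \<rho>"
    have B0K: "B0 \<subseteq> K0"
    proof
      fix x assume "x \<in> B0"
      then have "dist x0 x < 1 - dist (axis k 1) x0" by (simp add: B0_def \<rho>_def)
      then show "x \<in> K0" unfolding K0_def using dist_triangle[of "axis k 1" x x0] by simp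
    qed
    have B0re: "\<alpha> < Re (x$k)" if "x \<in> B0" for x
    proof -
      have "cmod ((x0 - x)$k) \<le> norm (x0 - x)" by (rule Finite_Cartesian_Product.norm_nth_le)
      then have "cmod (x0$k - x$k) < \<alpha>" using that by (simp add: B0_def \<rho>_def dist_norm)
      then have "\<bar>Re (x0$k - x$k)\<bar> < \<alpha>" using abs_Re_le_cmod le_less_trans by blast
      then have "Re (x0$k - x$k) < \<alpha>" using abs_less_iff by blast
      then have "Re (x0$k) - Re (x$k) < \<alpha>" by simp
      then show ?thesis unfolding \<alpha>_def by linarith
    qed
    have bound: "cmod (poly (Px x) (of_real t)) \<ge> a0/2 * t"
      if x: "x \<in> B0" and t1: "t \<ge> 1" and t2: "t \<ge> 2*C/a0" for x t
    proof (rule poly_lower[OF _ D1 _ a0 _ t1 t2])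
      have xK: "x \<in> K0" using x B0K by blast
      have dxx0: "dist x x0 < \<rho>" using x by (simp add: B0_def dist_commute)
      show "degree (Px x) \<le> D" by (rule Dmax[OF xK])
      have "dist (coeff (Px x) D) c0 < a0" using d1(2)[OF xK] dxx0 by (simp add: \<rho>_def)
      then have "cmod c0 - cmod (coeff (Px x) D) < a0"
        using norm_triangle_ineq2[of c0 "coeff (Px x) D"] by (simp add: dist_norm norm_minus_commute)
      then show "a0 \<le> cmod (coeff (Px x) D)" by (simp add: a0_def)
      have "dist (g2 x) (g2 x0) < 1" using d2(2)[OF xK] dxx0 by (simp add: \<rho>_def)
      then show "(\<Sum>n<D. cmod (coeff (Px x) n)) \<le> C" by (simp add: g2_def[symmetric] C_def dist_real_def)
    qed
    define a where "a = a0/2"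
    have apos: "a > 0" using a0 by (simp add: a_def)
    define t0 where "t0 = max 1 (2*C/a0)"
    define L where "L = max 1 (2/\<alpha>)"
    define tt where "tt n = t0 * L^n" for n :: nat
    have t01: "t0 \<ge> 1" by (simp add: t0_def)
    have L1: "L \<ge> 1" by (simp add: L_def)
    have Lp1: "L^n \<ge> 1" for n using L1 by simp
    have tt0: "tt n \<ge> t0" for n using Lp1[of n] t01 by (simp add: tt_def mult_le_cancel_left1)
    have tt1: "tt n \<ge> 1" for n using tt0[of n] t01 by linarith
    have tt2: "tt n \<ge> 2*C/a0" for n using tt0[of n] by (simp add: t0_def)
    have ttpos: "tt n > 0" for n using tt1[of n] by linarith
    define Y where "Y n = U ` (Tt (tt n) k ` B0)" for n
    have openB0: "open B0" by (simp add: B0_def)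
    have openT: "open (Tt (tt n) k ` B0)" for n
      using Tt_image[OF ttpos[of n], of k B0] openB0 Tinv_cont open_vimage by metis
    have openY: "open (Y n)" for n unfolding Y_def U_def by (rule UU_open[OF openT])
    have Ysub: "Y n \<subseteq> ball 0 1" for n
    proof
      fix z assume "z \<in> Y n"
      then obtain x where x: "x \<in> B0" "z = U (Tt (tt n) k x)" by (auto simp: Y_def)
      have "x \<in> ball (axis k 1) 1" using x(1) B0K by (auto simp: K0_def)
      then have "norm (Tt (tt n) k x) < 1" using tt1[of n] by (rule Tt_norm)
      then show "z \<in> ball 0 1" using x(2) by (simp add: U_def UU_norm)
    qed
    have Ydisj: "Y n \<inter> Y n' = {}" if nn: "n < n'" for n n'
    proof (rule ccontr)
      assume "Y n \<inter> Y n' \<noteq> {}"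
      then obtain x1 x2 where x1: "x1 \<in> B0" and x2: "x2 \<in> B0"
        and eq: "U (Tt (tt n) k x1) = U (Tt (tt n') k x2)" by (auto simp: Y_def)
      have yy: "Tt (tt n) k x1 = Tt (tt n') k x2" using eq UU_inj unfolding U_def by blast
      define r where "r = Re (1 - (Tt (tt n) k x1)$k)"
      have r1: "r = Re (x1$k) / (tt n)^2" unfolding r_def by (rule Tt_re[OF ttpos])
      have r2: "r = Re (x2$k) / (tt n')^2" unfolding r_def yy by (rule Tt_re[OF ttpos])
      have "\<alpha> < Re (x1$k)" using B0re[OF x1] .
      then have "\<alpha> / (tt n)^2 < Re (x1$k) / (tt n)^2" using ttpos[of n] by (intro divide_strict_right_mono) auto
      then have "\<alpha> / (t0 * L^n)^2 < r" using r1 by (simp add: tt_def)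
      moreover have "Re (x2$k) < 2" using x2 B0K K0_re(2)[of x2 k] by (auto simp: K0_def)
      then have "Re (x2$k) / (tt n')^2 < 2 / (tt n')^2" using ttpos[of n'] by (intro divide_strict_right_mono) auto
      then have "r < 2 / (t0 * L^n')^2" using r2 by (simp add: tt_def)
      moreover have "L \<ge> 2 / \<alpha>" by (simp add: L_def)
      moreover have "t0 > 0" using t01 by simp
      ultimately show False using window_sep[OF \<alpha> L1 _ _ nn] by blast
    qed
    define NN where "NN = 2 * CARD('n) + 2"
    have NNr: "real NN = 2 * real CARD('n) + 2" by (simp add: NN_def)
    define g where "g z = norm (f z) powr (2 * real CARD('n) + 2)" for z
    have Ybound: "(a * tt n)^NN \<le> g z" if z: "z \<in> Y n" for z n
    proof -
      obtain x where x: "x \<in> B0" "z = U (Tt (tt n) k x)" using z by (auto simp: Y_def)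
      have xk: "x$k \<noteq> 0" using K0k x(1) B0K by blast
      have "f z = poly (Px x) (of_real (tt n))" using fU[OF xk ttpos] x(2) by simp
      then have "a * tt n \<le> norm (f z)" using bound[OF x(1) tt1 tt2] by (simp add: a_def)
      then have "(a * tt n) powr real NN \<le> norm (f z) powr real NN"
        using apos ttpos[of n] by (intro powr_mono2) auto
      then show ?thesis using apos ttpos[of n] by (simp add: g_def NNr[symmetric] powr_realpow)
    qed
    have leb: "emeasure lebesgue S = emeasure lborel S" if "S \<in> sets borel" for S
      using that by (simp add: emeasure_completion main_part sets_completionI_sets)
    define \<mu>B where "\<mu>B = measure lborel B0"
    have \<mu>B: "\<mu>B > 0" using \<rho> by (simp add: \<mu>B_def B0_def)
    have B0fin: "emeasure lborel B0 = ennreal \<mu>B"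
      unfolding \<mu>B_def B0_def using emeasure_lborel_ball_finite[of x0 \<rho>] by (intro emeasure_eq_ennreal_measure) auto
    have Yfin: "emeasure lborel (Y n) < \<infinity>" for n
    proof -
      have "emeasure lborel (Y n) \<le> emeasure lborel (ball (0::complex^'n) 1)"
        by (rule emeasure_mono[OF Ysub]) simp
      then show ?thesis using emeasure_lborel_ball_finite[of "0::complex^'n" 1] by (simp add: order.strict_trans1)
    qed
    have Ymeas: "measure lborel (Y n) \<ge> (1 / tt n)^NN * \<mu>B" for n
    proof -
      have "emeasure lborel (Tt (tt n) k ` B0) \<le> emeasure lborel (U ` (Tt (tt n) k ` B0))"
        unfolding U_def
        by (rule emeasure_image_ge[OF UU_ball _ openT]) (use UU_inj openY in \<open>auto simp: U_def Y_def inj_def\<close>)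
      moreover have "emeasure lborel (Tt (tt n) k ` B0) = ennreal ((1 / tt n)^NN) * emeasure lborel B0"
        unfolding NN_def by (rule emeasure_Tt[OF ttpos openB0])
      ultimately have "ennreal ((1 / tt n)^NN * \<mu>B) \<le> emeasure lborel (Y n)"
        using ttpos[of n] \<mu>B by (simp add: Y_def B0fin ennreal_mult)
      also have "\<dots> = ennreal (measure lborel (Y n))"
        using Yfin[of n] by (intro emeasure_eq_ennreal_measure) auto
      finally show ?thesis by (simp add: ennreal_le_iff)
    qed
    define BB :: "(complex^'n) set" where "BB = ball 0 1"
    have Lp: "integrable (lebesgue_on BB) g"
      using assms(3) by (simp add: in_Lp_ball_def f_def[abs_def] g_def[abs_def] BB_def)
    have BBs: "BB \<inter> space lebesgue \<in> sets lebesgue" by (simp add: BB_def)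
    have Yleb: "Y n \<in> sets lebesgue" for n
    proof -
      have "bounded (Y n)" using Ysub[of n] bounded_ball bounded_subset by blast
      then have "Y n \<in> lmeasurable" using openY[of n] by (intro lmeasurable_open)
      then show ?thesis by (simp add: fmeasurable_def)
    qed
    have YsetsB: "Y n \<in> sets (lebesgue_on BB)" for n
      using Yleb[of n] Ysub[of n] BBs by (simp add: sets_restrict_space_iff BB_def)
    have YmB: "measure (lebesgue_on BB) (Y n) = measure lborel (Y n)" for n
    proof -
      have "measure (lebesgue_on BB) (Y n) = measure lebesgue (Y n)"
        using BBs Ysub[of n] by (intro measure_restrict_space) (auto simp: BB_def)
      also have "\<dots> = measure lborel (Y n)"
        unfolding measure_def using leb[of "Y n"] openY[of n] by simp
      finally show ?thesis .
    qed
    have YeB: "emeasure (lebesgue_on BB) (Y n) < \<infinity>" for n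
    proof -
      have "emeasure (lebesgue_on BB) (Y n) = emeasure lebesgue (Y n)"
        using BBs Ysub[of n] by (intro emeasure_restrict_space) (auto simp: BB_def)
      also have "\<dots> = emeasure lborel (Y n)" using leb[of "Y n"] openY[of n] by simp
      finally show ?thesis using Yfin[of n] by simp
    qed
    define \<kappa> where "\<kappa> = a^NN * \<mu>B"
    have \<kappa>: "\<kappa> > 0" using apos \<mu>B by (simp add: \<kappa>_def)
    define I where "I = integral\<^sup>L (lebesgue_on BB) g"
    obtain M :: nat where M: "I < real M * \<kappa>" using ex_less_of_nat_mult[OF \<kappa>] by blast
    define h where "h z = (\<Sum>n<M. (a * tt n)^NN * indicator (Y n) z)" for z
    have hint: "integrable (lebesgue_on BB) h"
      unfolding h_def
      by (rule Bochner_Integration.integrable_sum) (auto intro!: integrable_mult_right integrable_real_indicator YsetsB YeB)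
    have hle: "h z \<le> g z" if z: "z \<in> space (lebesgue_on BB)" for z
    proof (cases "\<exists>n<M. z \<in> Y n")
      case True
      then obtain n0 where n0: "n0 < M" "z \<in> Y n0" by blast
      have "z \<notin> Y n" if "n \<noteq> n0" for n
        using Ydisj[of n n0] Ydisj[of n0 n] n0(2) that by (cases "n < n0") auto
      then have "h z = (\<Sum>n<M. if n = n0 then (a * tt n)^NN else 0)"
        unfolding h_def using n0(2) by (intro sum.cong) (auto simp: indicator_def)
      also have "\<dots> = (a * tt n0)^NN" using n0(1) by simp
      also have "\<dots> \<le> g z" by (rule Ybound[OF n0(2)])
      finally show ?thesis .
    next
      case False
      then have "h z = 0" by (simp add: h_def indicator_def)
      then show ?thesis by (simp add: g_def)
    qed
    have "integral\<^sup>L (lebesgue_on BB) h \<le> I"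
      unfolding I_def by (rule integral_mono[OF hint Lp hle])
    moreover have "integral\<^sup>L (lebesgue_on BB) h = (\<Sum>n<M. (a * tt n)^NN * measure lborel (Y n))"
    proof -
      have "integral\<^sup>L (lebesgue_on BB) h = (\<Sum>n<M. (a * tt n)^NN * integral\<^sup>L (lebesgue_on BB) (indicator (Y n)))"
        unfolding h_def
        by (subst Bochner_Integration.integral_sum) (auto intro!: integrable_mult_right integrable_real_indicator YsetsB YeB)
      also have "\<dots> = (\<Sum>n<M. (a * tt n)^NN * measure lborel (Y n))"
      proof (intro sum.cong refl)
        fix n
        have "Y n \<inter> space (lebesgue_on BB) = Y n" using Ysub[of n] by (auto simp: BB_def)
        then show "(a * tt n)^NN * integral\<^sup>L (lebesgue_on BB) (indicator (Y n)) = (a * tt n)^NN * measure lborel (Y n)"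
          by (simp add: integral_indicator YmB)
      qed
      finally show ?thesis .
    qed
    moreover have "(\<Sum>n<M. (a * tt n)^NN * measure lborel (Y n)) \<ge> real M * \<kappa>"
    proof -
      have "\<kappa> \<le> (a * tt n)^NN * measure lborel (Y n)" for n
      proof -
        have "(a * tt n)^NN * measure lborel (Y n) \<ge> (a * tt n)^NN * ((1 / tt n)^NN * \<mu>B)"
          using Ymeas[of n] apos ttpos[of n] by (intro mult_left_mono) auto
        also have "(a * tt n)^NN * ((1 / tt n)^NN * \<mu>B) = \<kappa>"
          using ttpos[of n] by (simp add: \<kappa>_def power_mult_distrib power_one_over field_simps)
        finally show ?thesis .
      qed
      then have "(\<Sum>n<M. \<kappa>) \<le> (\<Sum>n<M. (a * tt n)^NN * measure lborel (Y n))"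
        by (intro sum_mono) auto
      then show ?thesis by simp
    qed
    ultimately show ?thesis using M by linarith
  qed
qed

end
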